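(* Let $X$ be a $T_1$ space and $\mathcal{P}$ an ideal of closed subsets of $X$. If $X$ is $\tau\mathcal{P}$-compact, then $X$ is $\tau\mathcal{P}$-pseudocompact.
   Context: An ideal of closed subsets of $X$ is a family $\mathcal{P}$ of closed subsets closed under finite unions and under passing to closed subsets. For $f\in\mathbb{R}^X$, $D_f$ is the set of discontinuity points of $f$; $C(X)_\mathcal{P}=\{f\in\mathbb{R}^X\colon\overline{D_f}\in\mathcal{P}\}$ and $C^*(X)_\mathcal{P}$ is the set of bounded members of $C(X)_\mathcal{P}$. For $f\in C(X)_\mathcal{P}$, $Z_\mathcal{P}(f)=\{x\colon f(x)=0\}$, and $Z_\mathcal{P}[X]$ is the set of all such zero sets. $X$ is $\tau\mathcal{P}$-compact if every family $\mathcal{F}\subseteq Z_\mathcal{P}[X]$ with the finite intersection property has nonempty intersection. $X$ is $\tau\mathcal{P}$-pseudocompact if $C(X)_\mathcal{P}=C^*(X)_\mathcal{P}$. *)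

theory Defs
  imports "HOL-Analysis.Analysis"
begin

text \<open>Functions X \<rightarrow> R are modelled as 'a \<Rightarrow> real; only values on topspace X matter.\<close>

definition continuous_at_pt :: "'a topology \<Rightarrow> ('a \<Rightarrow> real) \<Rightarrow> 'a \<Rightarrow> bool" where
  "continuous_at_pt X f x \<longleftrightarrow>
     (\<forall>V. open V \<and> f x \<in> V \<longrightarrow> (\<exists>U. openin X U \<and> x \<in> U \<and> f ` U \<subseteq> V))"

definition discont_pts :: "'a topology \<Rightarrow> ('a \<Rightarrow> real) \<Rightarrow> 'a set" where
  "discont_pts X f = {x \<in> topspace X. \<not> continuous_at_pt X f x}"

definition closed_ideal :: "'a topology \<Rightarrow> 'a set set \<Rightarrow> bool" where
  "closed_ideal X P \<longleftrightarrow>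
     P \<noteq> {} \<and>
     (\<forall>A\<in>P. closedin X A) \<and>
     (\<forall>A\<in>P. \<forall>B\<in>P. A \<union> B \<in> P) \<and>
     (\<forall>A\<in>P. \<forall>B. closedin X B \<and> B \<subseteq> A \<longrightarrow> B \<in> P)"

definition CP :: "'a topology \<Rightarrow> 'a set set \<Rightarrow> ('a \<Rightarrow> real) set" where
  "CP X P = {f. X closure_of (discont_pts X f) \<in> P}"

definition CP_bounded :: "'a topology \<Rightarrow> 'a set set \<Rightarrow> ('a \<Rightarrow> real) set" where
  "CP_bounded X P = {f \<in> CP X P. \<exists>M. \<forall>x\<in>topspace X. \<bar>f x\<bar> \<le> M}"

definition zero_set :: "'a topology \<Rightarrow> ('a \<Rightarrow> real) \<Rightarrow> 'a set" where
  "zero_set X f = {x \<in> topspace X. f x = 0}"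

definition ZP :: "'a topology \<Rightarrow> 'a set set \<Rightarrow> 'a set set" where
  "ZP X P = zero_set X ` CP X P"

definition fip :: "'a topology \<Rightarrow> 'a set set \<Rightarrow> bool" where
  "fip X F \<longleftrightarrow> (\<forall>G. G \<subseteq> F \<and> finite G \<longrightarrow> topspace X \<inter> \<Inter>G \<noteq> {})"

definition tauP_compact :: "'a topology \<Rightarrow> 'a set set \<Rightarrow> bool" where
  "tauP_compact X P \<longleftrightarrow>
     (\<forall>F. F \<subseteq> ZP X P \<and> fip X F \<longrightarrow> topspace X \<inter> \<Inter>F \<noteq> {})"

definition tauP_pseudocompact :: "'a topology \<Rightarrow> 'a set set \<Rightarrow> bool" where
  "tauP_pseudocompact X P \<longleftrightarrow> CP X P = CP_bounded X P"

end

theory Submission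
  imports Defs
begin

lemma discont_comp:
  fixes h :: "real \<Rightarrow> real"
  assumes "continuous_on UNIV h"
  shows "discont_pts X (\<lambda>x. h (f x)) \<subseteq> discont_pts X f"
proof
  fix x assume x: "x \<in> discont_pts X (\<lambda>x. h (f x))"
  show "x \<in> discont_pts X f"
  proof (rule ccontr)
    assume "x \<notin> discont_pts X f"
    with x have c: "continuous_at_pt X f x" and xt: "x \<in> topspace X"
      by (auto simp: discont_pts_def)
    have "continuous_at_pt X (\<lambda>x. h (f x)) x"
      unfolding continuous_at_pt_def
    proof (intro allI impI)
      fix V assume V: "open V \<and> h (f x) \<in> V"
      have "open (h -` V)" using V assms open_vimage by blast
      moreover have "f x \<in> h -` V" using V by simp
      ultimately obtain U where "openin X U \<and> x \<in> U \<and> f ` U \<subseteq> h -` V"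
        using c unfolding continuous_at_pt_def by blast
      then show "\<exists>U. openin X U \<and> x \<in> U \<and> (\<lambda>x. h (f x)) ` U \<subseteq> V" by blast
    qed
    with x show False by (auto simp: discont_pts_def)
  qed
qed

theorem theorem4p2:
  fixes X :: "'a topology" and P :: "'a set set"
  assumes "t1_space X"
    and "closed_ideal X P"
    and "tauP_compact X P"
  shows "tauP_pseudocompact X P"
  unfolding tauP_pseudocompact_def
proof (rule ccontr)
  assume "CP X P \<noteq> CP_bounded X P"
  then obtain f where f: "f \<in> CP X P" and unb: "\<And>M. \<exists>x\<in>topspace X. \<bar>f x\<bar> > M"
  proof -
    have "CP_bounded X P \<subseteq> CP X P" by (auto simp: CP_bounded_def)
    with \<open>CP X P \<noteq> CP_bounded X P\<close> obtain f where "f \<in> CP X P" "f \<notin> CP_bounded X P" by blast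
    then show ?thesis using that unfolding CP_bounded_def by (auto simp: not_le)
  qed
  define g where "g n x = max 0 (real n - \<bar>f x\<bar>)" for n :: nat and x
  have gCP: "g n \<in> CP X P" for n
  proof -
    have "continuous_on UNIV (\<lambda>t::real. max 0 (real n - \<bar>t\<bar>))"
      by (intro continuous_intros)
    then have "discont_pts X (g n) \<subseteq> discont_pts X f"
      using discont_comp[of "\<lambda>t::real. max 0 (real n - \<bar>t\<bar>)" X f] by (simp add: g_def[abs_def])
    then have "X closure_of discont_pts X (g n) \<subseteq> X closure_of discont_pts X f"
      by (rule closure_of_mono)
    moreover have "X closure_of discont_pts X f \<in> P" using f by (simp add: CP_def)
    ultimately show ?thesis using assms(2) unfolding closed_ideal_def CP_def
      by (meson closedin_closure_of mem_Collect_eq)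
  qed
  have Z: "zero_set X (g n) = {x \<in> topspace X. \<bar>f x\<bar> \<ge> n}" for n
    by (auto simp: zero_set_def g_def)
  define F where "F = range (\<lambda>n. zero_set X (g n))"
  have FZ: "F \<subseteq> ZP X P" using gCP by (auto simp: F_def ZP_def)
  have "fip X F" unfolding fip_def
  proof (intro allI impI)
    fix G assume G: "G \<subseteq> F \<and> finite G"
    then obtain I where I: "finite I" "G = (\<lambda>n. zero_set X (g n)) ` I"
      unfolding F_def by (meson finite_subset_image)
    define N where "N = Max (insert 0 I)"
    have IN: "i \<le> N" if "i \<in> I" for i using I(1) that by (simp add: N_def)
    obtain x where x: "x \<in> topspace X" "\<bar>f x\<bar> > real N" using unb by blast
    have "x \<in> topspace X \<inter> \<Inter>G"
      using x IN I(2) Z by (auto, meson le_less_trans less_eq_real_def of_nat_le_iff)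
    then show "topspace X \<inter> \<Inter>G \<noteq> {}" by blast
  qed
  with FZ assms(3) have "topspace X \<inter> \<Inter>F \<noteq> {}" by (auto simp: tauP_compact_def)
  then obtain x where x: "x \<in> topspace X" "\<And>n. x \<in> zero_set X (g n)" by (auto simp: F_def)
  obtain n :: nat where "\<bar>f x\<bar> < n" using reals_Archimedean2 by blast
  with x(2)[of n] Z show False by auto
qed

end
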